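(* Fix a single institution with category capacities $q=(q^{o},q^{SC},q^{ST},q^{OBC},q^{EWS})$ of nonnegative integers, a finite set of individuals $\mathcal{I}$ with category memberships $t:\mathcal{I}\to\mathcal{R}\cup\{GC\}$ where $\mathcal{R}=\{SC,ST,OBC,EWS\}$, and a strict merit ranking $\succ$ (a linear order) over $\mathcal{I}$. A (category-assigning) choice rule $C$ satisfies within-category fairness, the over-and-above principle, and quota-filling subject to eligibility (all defined in the context) at every set of applicants $A\subseteq\mathcal{I}$ if and only if $C$ is the over-and-above choice rule $C^{OA}$, i.e. $C^{c}(A)=C^{OA,c}(A)$ for every $A\subseteq\mathcal{I}$ and every category $c\in\{o\}\cup\mathcal{R}$.
   Context: Categories of positions are $\mathcal{C}=\{o\}\cup\mathcal{R}$, where $o$ is the open category. Individuals with $t_i=GC$ (general category) are eligible only for open-category positions; an individual with $t_i=r\in\mathcal{R}$ is eligible for open-category positions and for category-$r$ positions. For $A\subseteq\mathcal{I}$ and $r\in\mathcal{R}$ let $A^{r}=\{i\in A: t_i=r\}$, and let $rank_A(i)=k$ iff $|\{j\in A: j\succ i\}|=k-1$. A choice rule $C$ assigns to each $A\subseteq\mathcal{I}$ pairwise disjoint sets $C^{o}(A),C^{SC}(A),C^{ST}(A),C^{OBC}(A),C^{EWS}(A)\subseteq A$ with $|C^{o}(A)|\le q^{o}$, and for each $r\in\mathcal{R}$, $C^{r}(A)\subseteq A^{r}$ and $|C^{r}(A)|\le q^{r}$; the chosen set is $C(A)=\bigcup_{c\in\mathcal{C}}C^{c}(A)$. An individual is "assigned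 a position" if she is in $C(A)$, and "assigned to a category-$c$ position" if she is in $C^{c}(A)$. Axioms (for a given $A$): Over-and-above principle: every $i\in A$ with $rank_A(i)\le q^{o}$ is in $C^{o}(A)$. Within-category fairness: for $i,j\in A$ with $t_i=t_j$ and $i\succ j$, if $j\in C(A)$ then $i\in C(A)$. Quota-filling subject to eligibility: for every $r\in\mathcal{R}$, if some $i\in A$ with $t_i=r$ is not in $C(A)$, then $|C^{r}(A)|=q^{r}$. Over-and-above choice rule $C^{OA}$: Stage 1: $C^{OA,o}(A)$ is the set of the $\min(q^{o},|A|)$ highest-ranked individuals of $A$ under $\succ$. Stage 2: with $A'=A\setminus C^{OA,o}(A)$, for each $r\in\mathcal{R}$, $C^{OA,r}(A)$ is the set of the $\min(q^{r},|A'^{r}|)$ highest-ranked individuals of $A'^{r}=\{i\in A': t_i=r\}$ under $\succ$. Then $C^{OA}(A)=C^{OA,o}(A)\cup\bigcup_{r\in\mathcal{R}}C^{OA,r}(A)$. *)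

theory Defs
  imports Main
begin

datatype rcat = SC | ST | OBC | EWS

datatype itype = GC | Res rcat

datatype category = Open | RC rcat

text \<open>Merit ranking: a strict linear order R on the individuals; (j,i) \<in> R means j \<succ> i.
  A choice rule: C A c is the set of individuals in A assigned to category-c positions.\<close>

definition rank :: "('i \<times> 'i) set \<Rightarrow> 'i set \<Rightarrow> 'i \<Rightarrow> nat" where
  "rank R A i = card {j \<in> A. (j, i) \<in> R} + 1"

definition of_type :: "('i \<Rightarrow> itype) \<Rightarrow> 'i set \<Rightarrow> rcat \<Rightarrow> 'i set" where
  "of_type t A r = {i \<in> A. t i = Res r}"

definition chosen :: "('i set \<Rightarrow> category \<Rightarrow> 'i set) \<Rightarrow> 'i set \<Rightarrow> 'i set" where
  "chosen C A = (\<Union>c. C A c)"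

definition is_choice_at ::
  "(category \<Rightarrow> nat) \<Rightarrow> ('i \<Rightarrow> itype) \<Rightarrow> ('i set \<Rightarrow> category \<Rightarrow> 'i set) \<Rightarrow> 'i set \<Rightarrow> bool" where
  "is_choice_at q t C A \<longleftrightarrow>
     (\<forall>c. C A c \<subseteq> A) \<and>
     (\<forall>c c'. c \<noteq> c' \<longrightarrow> C A c \<inter> C A c' = {}) \<and>
     card (C A Open) \<le> q Open \<and>
     (\<forall>r. C A (RC r) \<subseteq> of_type t A r \<and> card (C A (RC r)) \<le> q (RC r))"

definition over_and_above ::
  "(category \<Rightarrow> nat) \<Rightarrow> ('i \<times> 'i) set \<Rightarrow> ('i set \<Rightarrow> category \<Rightarrow> 'i set) \<Rightarrow> 'i set \<Rightarrow> bool" where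
  "over_and_above q R C A \<longleftrightarrow> (\<forall>i \<in> A. rank R A i \<le> q Open \<longrightarrow> i \<in> C A Open)"

definition within_category_fair ::
  "('i \<Rightarrow> itype) \<Rightarrow> ('i \<times> 'i) set \<Rightarrow> ('i set \<Rightarrow> category \<Rightarrow> 'i set) \<Rightarrow> 'i set \<Rightarrow> bool" where
  "within_category_fair t R C A \<longleftrightarrow>
     (\<forall>i \<in> A. \<forall>j \<in> A. t i = t j \<and> (i, j) \<in> R \<and> j \<in> chosen C A \<longrightarrow> i \<in> chosen C A)"

definition quota_filling ::
  "(category \<Rightarrow> nat) \<Rightarrow> ('i \<Rightarrow> itype) \<Rightarrow> ('i set \<Rightarrow> category \<Rightarrow> 'i set) \<Rightarrow> 'i set \<Rightarrow> bool" where
  "quota_filling q t C A \<longleftrightarrow>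
     (\<forall>r. (\<exists>i \<in> A. t i = Res r \<and> i \<notin> chosen C A) \<longrightarrow> card (C A (RC r)) = q (RC r))"

text \<open>The k highest-ranked individuals of B (all of B if |B| < k), i.e. those of rank \<le> k.\<close>
definition top :: "('i \<times> 'i) set \<Rightarrow> nat \<Rightarrow> 'i set \<Rightarrow> 'i set" where
  "top R k B = {i \<in> B. rank R B i \<le> k}"

definition C_OA ::
  "(category \<Rightarrow> nat) \<Rightarrow> ('i \<Rightarrow> itype) \<Rightarrow> ('i \<times> 'i) set \<Rightarrow> 'i set \<Rightarrow> category \<Rightarrow> 'i set" where
  "C_OA q t R A c =
     (case c of
        Open \<Rightarrow> top R (q Open) A
      | RC r \<Rightarrow> top R (q (RC r)) (of_type t (A - top R (q Open) A) r))"

end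

theory Submission imports Defs begin

lemma rank_less:
  assumes "trans R" "irrefl R" "finite B" "i \<in> B" "(i,j) \<in> R"
  shows "rank R B i < rank R B j"
proof -
  have "{k\<in>B. (k,i)\<in>R} \<subset> {k\<in>B. (k,j)\<in>R}"
    using assms by (auto simp: irrefl_def dest: transD)
  then show ?thesis unfolding rank_def using assms(3) by (simp add: psubset_card_mono)
qed

lemma rank_le_card:
  assumes "irrefl R" "finite B" "i \<in> B"
  shows "rank R B i \<le> card B"
proof -
  have "{k\<in>B. (k,i)\<in>R} \<subseteq> B - {i}" using assms by (auto simp: irrefl_def)
  then have "card {k\<in>B. (k,i)\<in>R} \<le> card (B - {i})" using assms by (intro card_mono) auto
  then show ?thesis unfolding rank_def using assms
    by (metis Suc_eq_plus1 card_Diff1_less Suc_leI order_le_less_trans)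
qed

lemma rank_inj:
  assumes "trans R" "irrefl R" "total_on B R" "finite B"
  shows "inj_on (rank R B) B"
proof (rule inj_onI)
  fix x y assume "x \<in> B" "y \<in> B" "rank R B x = rank R B y"
  then show "x = y" using assms rank_less[OF assms(1,2,4)]
    unfolding total_on_def by (metis less_irrefl)
qed

lemma rank_image:
  assumes "trans R" "irrefl R" "total_on B R" "finite B"
  shows "rank R B ` B = {1..card B}"
proof -
  have s: "rank R B ` B \<subseteq> {1..card B}"
    using rank_le_card[OF assms(2,4)] by (auto simp: rank_def)
  have "card (rank R B ` B) = card B" using card_image[OF rank_inj[OF assms]] .
  then show ?thesis using s by (intro card_subset_eq) auto
qed

lemma card_top:
  assumes "trans R" "irrefl R" "total_on B R" "finite B"
  shows "card (top R k B) = min k (card B)"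
proof -
  have "rank R B ` top R k B = {1..min k (card B)}"
  proof (rule set_eqI, rule iffI)
    fix x assume "x \<in> rank R B ` top R k B"
    then show "x \<in> {1..min k (card B)}" using rank_image[OF assms] unfolding top_def by auto
  next
    fix x assume x: "x \<in> {1..min k (card B)}"
    then have "x \<in> rank R B ` B" using rank_image[OF assms] by auto
    then obtain y where "y \<in> B" "x = rank R B y" by auto
    then show "x \<in> rank R B ` top R k B" using x unfolding top_def by auto
  qed
  moreover have "inj_on (rank R B) (top R k B)"
    using rank_inj[OF assms] by (rule inj_on_subset) (auto simp: top_def)
  ultimately show ?thesis by (metis card_atLeastAtMost card_image diff_Suc_1 Suc_eq_plus1)
qed

lemma top_sub: "top R k B \<subseteq> B" by (auto simp: top_def)

lemma top_above:
  assumes "trans R" "irrefl R" "total_on B R" "finite B"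
    and "top R k B \<subseteq> X" "X \<subseteq> B" "card X \<le> k"
  shows "X = top R k B"
proof (cases "k \<le> card B")
  case True
  then have "card (top R k B) = k" using card_top[OF assms(1-4)] by simp
  then show ?thesis using assms(4-7) True
    by (metis card_seteq finite_subset)
next
  case False
  then have "card (top R k B) = card B" using card_top[OF assms(1-4)] by simp
  then have "top R k B = B" using assms(4) top_sub by (metis card_subset_eq)
  then show ?thesis using assms(5,6) by auto
qed

lemma upset_top:
  assumes "trans R" "irrefl R" "total_on B R" "finite B"
    and "U \<subseteq> B" and up: "\<forall>i\<in>B. \<forall>j\<in>U. (i,j) \<in> R \<longrightarrow> i \<in> U"
    and c: "card U = k \<or> (U = B \<and> card B \<le> k)"
  shows "U = top R k B"
proof -
  have cU: "card U \<le> k" using c by auto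
  have fU: "finite U" using assms(4,5) finite_subset by blast
  have "U \<subseteq> top R k B"
  proof
    fix j assume j: "j \<in> U"
    have "{i\<in>B. (i,j)\<in>R} \<subseteq> U - {j}" using up j assms(2) by (auto simp: irrefl_def)
    then have "card {i\<in>B. (i,j)\<in>R} \<le> card (U - {j})" using fU by (intro card_mono) auto
    also have "\<dots> < card U" using fU j by (rule card_Diff1_less)
    finally have "rank R B j \<le> card U" unfolding rank_def by simp
    then show "j \<in> top R k B" using cU j assms(5) unfolding top_def by auto
  qed
  moreover have "card (top R k B) \<le> card U" using card_top[OF assms(1-4)] c by auto
  moreover have "finite (top R k B)" using assms(4) top_sub finite_subset by metis
  ultimately show ?thesis by (metis card_seteq)
qed

lemma chosen_iff: "x \<in> chosen C A \<longleftrightarrow> (\<exists>c. x \<in> C A c)"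
  by (simp add: chosen_def)

lemma OA_props:
  assumes "trans R" "irrefl R" "total_on A R" "finite A"
  shows "within_category_fair t R (C_OA q t R) A \<and> over_and_above q R (C_OA q t R) A
     \<and> quota_filling q t (C_OA q t R) A"
proof (intro conjI)
  show "over_and_above q R (C_OA q t R) A"
    by (auto simp: over_and_above_def C_OA_def top_def)
next
  show "quota_filling q t (C_OA q t R) A"
    unfolding quota_filling_def
  proof (intro allI impI)
    fix r assume "\<exists>i\<in>A. t i = Res r \<and> i \<notin> chosen (C_OA q t R) A"
    then obtain i where i: "i \<in> A" "t i = Res r" "i \<notin> chosen (C_OA q t R) A" by blast
    define B where "B = of_type t (A - top R (q Open) A) r"
    have "i \<notin> C_OA q t R A Open" using i(3) by (auto simp: chosen_def)
    then have iO: "i \<notin> top R (q Open) A" by (simp add: C_OA_def)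
    have iB: "i \<in> B" using i iO by (auto simp: B_def of_type_def)
    have "i \<notin> C_OA q t R A (RC r)" using i(3) by (auto simp: chosen_def)
    then have "i \<notin> top R (q (RC r)) B" by (simp add: C_OA_def B_def)
    then have "q (RC r) < rank R B i" using iB by (auto simp: top_def)
    moreover have fB: "finite B" using assms(4) by (auto simp: B_def of_type_def)
    moreover have "rank R B i \<le> card B" using rank_le_card[OF assms(2) fB iB] .
    moreover have "total_on B R" using assms(3) by (auto simp: B_def of_type_def total_on_def)
    ultimately have "card (top R (q (RC r)) B) = q (RC r)" using card_top[OF assms(1,2)] by simp
    then show "card (C_OA q t R A (RC r)) = q (RC r)" by (simp add: C_OA_def B_def)
  qed
next
  show "within_category_fair t R (C_OA q t R) A"
    unfolding within_category_fair_def
  proof (intro ballI impI)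
    fix i j assume ij: "i \<in> A" "j \<in> A" "t i = t j \<and> (i, j) \<in> R \<and> j \<in> chosen (C_OA q t R) A"
    then obtain c where jc: "j \<in> C_OA q t R A c" unfolding chosen_def by blast
    have rl: "rank R A i < rank R A j" using rank_less[OF assms(1,2,4) ij(1)] ij(3) by blast
    show "i \<in> chosen (C_OA q t R) A"
    proof (cases c)
      case Open
      then have "rank R A j \<le> q Open" using jc by (simp add: C_OA_def top_def)
      then have "i \<in> top R (q Open) A" using rl ij(1) by (simp add: top_def)
      then have "i \<in> C_OA q t R A Open" by (simp add: C_OA_def)
      then show ?thesis unfolding chosen_def by blast
    next
      case (RC r)
      define B where "B = of_type t (A - top R (q Open) A) r"
      have eqB: "C_OA q t R A (RC r) = top R (q (RC r)) B" unfolding B_def C_OA_def by simp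
      have jB: "j \<in> top R (q (RC r)) B" using jc unfolding RC eqB .
      show ?thesis
      proof (cases "i \<in> top R (q Open) A")
        case True
        then have "i \<in> C_OA q t R A Open" by (simp add: C_OA_def)
        then show ?thesis unfolding chosen_def by blast
      next
        case False
        have jB': "j \<in> B" using jB unfolding top_def by blast
        then have tj: "t j = Res r" unfolding B_def of_type_def by blast
        have tij: "t i = t j" using ij(3) by blast
        have iB: "i \<in> B" using False ij(1) tj tij by (simp add: B_def of_type_def)
        have fB: "finite B" using assms(4) unfolding B_def of_type_def by simp
        have "rank R B i < rank R B j" using rank_less[OF assms(1,2) fB iB] ij(3) by blast
        then have "i \<in> top R (q (RC r)) B" using jB iB by (simp add: top_def)
        then have "i \<in> C_OA q t R A (RC r)" unfolding eqB .
        then show ?thesis unfolding chosen_def by blast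
      qed
    qed
  qed
qed

lemma forward_one:
  assumes tr: "trans R" and ir: "irrefl R" and to: "total_on A R" and fA: "finite A"
    and ch: "is_choice_at q t C A"
    and fair: "within_category_fair t R C A" and oa: "over_and_above q R C A"
    and qf: "quota_filling q t C A"
  shows "C A c = C_OA q t R A c"
proof -
  have sub: "\<And>c. C A c \<subseteq> A" and dis: "\<And>c c'. c \<noteq> c' \<Longrightarrow> C A c \<inter> C A c' = {}"
    and cO: "card (C A Open) \<le> q Open"
    and sR: "\<And>r. C A (RC r) \<subseteq> of_type t A r" and cR: "\<And>r. card (C A (RC r)) \<le> q (RC r)"
    using ch unfolding is_choice_at_def by blast+
  have O: "C A Open = top R (q Open) A"
  proof (rule top_above[OF tr ir to fA])
    show "top R (q Open) A \<subseteq> C A Open" using oa unfolding over_and_above_def top_def by blast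
  qed (use sub cO in auto)
  have RR: "C A (RC r) = C_OA q t R A (RC r)" for r
  proof -
    define B where "B = of_type t (A - top R (q Open) A) r"
    define U where "U = C A (RC r)"
    have eqB: "C_OA q t R A (RC r) = top R (q (RC r)) B" unfolding B_def C_OA_def by simp
    have fB: "finite B" using fA unfolding B_def of_type_def by simp
    have toB: "total_on B R" using to unfolding B_def of_type_def total_on_def by blast
    have UB: "U \<subseteq> B"
    proof
      fix x assume x: "x \<in> U"
      then have "x \<in> of_type t A r" using sR unfolding U_def by blast
      moreover have "x \<notin> C A Open" using x dis[of "RC r" Open] unfolding U_def by blast
      ultimately show "x \<in> B" using O unfolding B_def of_type_def by auto
    qed
    have key: "x \<in> chosen C A \<Longrightarrow> x \<in> U" if xB: "x \<in> B" for x
    proof -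
      assume "x \<in> chosen C A"
      then obtain c' where xc: "x \<in> C A c'" unfolding chosen_def by blast
      have tx: "t x = Res r" and xO: "x \<notin> top R (q Open) A"
        using xB unfolding B_def of_type_def by auto
      show "x \<in> U"
      proof (cases c')
        case Open
        then show ?thesis using xc xO O by simp
      next
        case (RC r')
        then have "t x = Res r'" using xc sR[of r'] unfolding of_type_def by blast
        then have "r' = r" using tx by simp
        then show ?thesis using xc RC unfolding U_def by simp
      qed
    qed
    have up: "\<forall>i\<in>B. \<forall>j\<in>U. (i,j) \<in> R \<longrightarrow> i \<in> U"
    proof (intro ballI impI)
      fix i j assume i: "i \<in> B" and j: "j \<in> U" and ij: "(i,j) \<in> R"
      have jB: "j \<in> B" using j UB by blast
      have "t i = Res r" "t j = Res r" "i \<in> A" "j \<in> A" using i jB unfolding B_def of_type_def by auto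
      moreover have "j \<in> chosen C A" using j unfolding U_def chosen_def by blast
      ultimately have "i \<in> chosen C A" using fair ij unfolding within_category_fair_def by metis
      then show "i \<in> U" using key i by blast
    qed
    have cc: "card U = q (RC r) \<or> (U = B \<and> card B \<le> q (RC r))"
    proof (cases "U = B")
      case True
      then show ?thesis using cR[of r] unfolding U_def by simp
    next
      case False
      then obtain i where i: "i \<in> B" "i \<notin> U" using UB by blast
      then have "i \<notin> chosen C A" using key by blast
      moreover have "i \<in> A" "t i = Res r" using i unfolding B_def of_type_def by auto
      ultimately have "card (C A (RC r)) = q (RC r)" using qf unfolding quota_filling_def by blast
      then show ?thesis unfolding U_def by simp
    qed
    have "U = top R (q (RC r)) B" by (rule upset_top[OF tr ir toB fB UB up cc])
    then show ?thesis using eqB unfolding U_def by simp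
  qed
  show ?thesis
  proof (cases c)
    case Open
    then show ?thesis using O by (simp add: C_OA_def)
  next
    case (RC r)
    then show ?thesis using RR by simp
  qed
qed

theorem theorem1:
  fixes I :: "'i set" and t :: "'i \<Rightarrow> itype" and R :: "('i \<times> 'i) set"
    and q :: "category \<Rightarrow> nat" and C :: "'i set \<Rightarrow> category \<Rightarrow> 'i set"
  assumes "finite I"
    and "strict_linear_order_on I R"
    and "R \<subseteq> I \<times> I"
    and "\<forall>A \<subseteq> I. is_choice_at q t C A"
  shows "(\<forall>A \<subseteq> I. within_category_fair t R C A \<and> over_and_above q R C A \<and> quota_filling q t C A)
         \<longleftrightarrow> (\<forall>A \<subseteq> I. \<forall>c. C A c = C_OA q t R A c)"
proof -
  have tr: "trans R" and ir: "irrefl R" and toI: "total_on I R"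
    using assms(2) unfolding strict_linear_order_on_def by auto
  have sA: "finite A \<and> total_on A R" if "A \<subseteq> I" for A
    using that assms(1) toI finite_subset unfolding total_on_def by blast
  show ?thesis
  proof
    assume H: "\<forall>A \<subseteq> I. within_category_fair t R C A \<and> over_and_above q R C A \<and> quota_filling q t C A"
    show "\<forall>A \<subseteq> I. \<forall>c. C A c = C_OA q t R A c"
    proof (intro allI impI)
      fix A c assume A: "A \<subseteq> I"
      show "C A c = C_OA q t R A c"
        using forward_one[OF tr ir _ _ _ _ _ _] sA[OF A] assms(4) H A by blast
    qed
  next
    assume H: "\<forall>A \<subseteq> I. \<forall>c. C A c = C_OA q t R A c"
    show "\<forall>A \<subseteq> I. within_category_fair t R C A \<and> over_and_above q R C A \<and> quota_filling q t C A"
    proof (intro allI impI)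
      fix A assume A: "A \<subseteq> I"
      have "C A = C_OA q t R A" using H A by blast
      moreover have "within_category_fair t R (C_OA q t R) A \<and> over_and_above q R (C_OA q t R) A
         \<and> quota_filling q t (C_OA q t R) A" using OA_props[OF tr ir] sA[OF A] by blast
      ultimately show "within_category_fair t R C A \<and> over_and_above q R C A \<and> quota_filling q t C A"
        unfolding within_category_fair_def over_and_above_def quota_filling_def chosen_def by simp
    qed
  qed
qed

end
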